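(* Let $N=1$, $\chi>0$, $k\in(-1,0)$ and $m>m_c=1-k$. Then every stationary state $\bar\rho\in\mathcal Y$ of (KS) satisfies, for every $p\in\mathbb R$, $$\bar\rho(p)^m=\frac{\chi}{2}\int_{\mathbb R}\int_0^1|q|^k\,\bar\rho(p-sq)\,\bar\rho(p-sq+q)\,ds\,dq.$$
   Context: Here $N=1$. Let $W_k(x)=|x|^k/k$ and, for a density $\rho$, $S_k=W_k*\rho$, with $\partial_x S_k(x)=\int_{\mathbb R}W_k'(x-y)(\rho(y)-\rho(x))\,dy$. Equation (KS) is $\partial_t\rho=\partial_{xx}\rho^m+\chi\partial_x(\rho\,\partial_xS_k)$. $\mathcal Y=\{\rho\in L^1_+(\mathbb R)\cap L^m(\mathbb R):\|\rho\|_1=1,\ \int x\rho=0\}$. A stationary state of (KS) is $\bar\rho\in L^1_+\cap L^\infty(\mathbb R)$ with $\|\bar\rho\|_1=1$ such that, with $\bar S_k=W_k*\bar\rho$: $\bar\rho^m\in W^{1,2}_{loc}$, $\partial_x\bar S_k\in L^1_{loc}$, $\partial_x\bar\rho^m=-\chi\bar\rho\,\partial_x\bar S_k$ in distributions, and $\bar\rho\in C^{0,\alpha}(\mathbb R)$ for some $\alpha\in(-k,1)$. *)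

theory Defs
  imports "HOL-Analysis.Analysis"
begin

text \<open>Derivative of the kernel W_k(x) = |x|^k / k, namely W_k'(x) = sgn(x) |x|^(k-1).\<close>
definition Wk_deriv :: "real \<Rightarrow> real \<Rightarrow> real" where
  "Wk_deriv k x = sgn x * \<bar>x\<bar> powr (k - 1)"

definition dS :: "real \<Rightarrow> (real \<Rightarrow> real) \<Rightarrow> real \<Rightarrow> real" where
  "dS k \<rho> x = (\<integral>y. Wk_deriv k (x - y) * (\<rho> y - \<rho> x) \<partial>lborel)"

definition test_fun :: "(real \<Rightarrow> real) \<Rightarrow> bool" where
  "test_fun \<phi> \<longleftrightarrow>
     (\<exists>D :: nat \<Rightarrow> real \<Rightarrow> real. D 0 = \<phi> \<and>
        (\<forall>n x. (D n has_real_derivative D (Suc n) x) (at x)))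
     \<and> bounded {x. \<phi> x \<noteq> 0}"

definition L1loc :: "(real \<Rightarrow> real) \<Rightarrow> bool" where
  "L1loc f \<longleftrightarrow> f \<in> borel_measurable lborel \<and>
     (\<forall>a b. set_integrable lborel {a..b} f)"

definition L2loc :: "(real \<Rightarrow> real) \<Rightarrow> bool" where
  "L2loc f \<longleftrightarrow> f \<in> borel_measurable lborel \<and>
     (\<forall>a b. set_integrable lborel {a..b} (\<lambda>x. (f x)\<^sup>2))"

definition weak_deriv :: "(real \<Rightarrow> real) \<Rightarrow> (real \<Rightarrow> real) \<Rightarrow> bool" where
  "weak_deriv f g \<longleftrightarrow> (\<forall>\<phi>. test_fun \<phi> \<longrightarrow>
     (\<integral>x. f x * deriv \<phi> x \<partial>lborel) = - (\<integral>x. g x * \<phi> x \<partial>lborel))"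

definition W12loc :: "(real \<Rightarrow> real) \<Rightarrow> bool" where
  "W12loc f \<longleftrightarrow> L2loc f \<and> (\<exists>g. L2loc g \<and> weak_deriv f g)"

definition holder :: "real \<Rightarrow> (real \<Rightarrow> real) \<Rightarrow> bool" where
  "holder \<alpha> f \<longleftrightarrow> bounded (range f) \<and>
     (\<exists>C. \<forall>x y. \<bar>f x - f y\<bar> \<le> C * \<bar>x - y\<bar> powr \<alpha>)"

definition in_Y :: "real \<Rightarrow> (real \<Rightarrow> real) \<Rightarrow> bool" where
  "in_Y m \<rho> \<longleftrightarrow> (\<forall>x. 0 \<le> \<rho> x) \<and> integrable lborel \<rho> \<and>
     integrable lborel (\<lambda>x. \<bar>\<rho> x\<bar> powr m) \<and>
     (\<integral>x. \<rho> x \<partial>lborel) = 1 \<and>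
     integrable lborel (\<lambda>x. x * \<rho> x) \<and> (\<integral>x. x * \<rho> x \<partial>lborel) = 0"

definition stationary_state :: "real \<Rightarrow> real \<Rightarrow> real \<Rightarrow> (real \<Rightarrow> real) \<Rightarrow> bool" where
  "stationary_state chi k m \<rho> \<longleftrightarrow>
     (\<forall>x. 0 \<le> \<rho> x) \<and> \<rho> \<in> borel_measurable lborel \<and> integrable lborel \<rho> \<and>
     bounded (range \<rho>) \<and> (\<integral>x. \<rho> x \<partial>lborel) = 1 \<and>
     W12loc (\<lambda>x. \<rho> x powr m) \<and>
     L1loc (dS k \<rho>) \<and>
     weak_deriv (\<lambda>x. \<rho> x powr m) (\<lambda>x. - chi * \<rho> x * dS k \<rho> x) \<and>
     (\<exists>\<alpha>. -k < \<alpha> \<and> \<alpha> < 1 \<and> holder \<alpha> \<rho>)"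

end

theory Submission
  imports Defs "HOL-Computational_Algebra.Polynomial"
begin

definition smooth :: "(real \<Rightarrow> real) \<Rightarrow> bool" where
 "smooth f \<longleftrightarrow> (\<exists>D::nat \<Rightarrow> real \<Rightarrow> real. D 0 = f \<and> (\<forall>n x. (D n has_real_derivative D (Suc n) x) (at x)))"

lemma smooth_coind:
  assumes "f \<in> S" "\<And>h. h \<in> S \<Longrightarrow> \<exists>h'\<in>S. \<forall>x. (h has_real_derivative h' x) (at x)"
  shows "smooth f"
proof -
  obtain d where d: "\<And>h. h \<in> S \<Longrightarrow> d h \<in> S \<and> (\<forall>x. (h has_real_derivative d h x) (at x))"
    using assms(2) by metis
  define D where "D n = (d ^^ n) f" for n
  have DS: "D n \<in> S" for n by (induction n) (auto simp: D_def assms(1) d)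
  show ?thesis unfolding smooth_def
    by (rule exI[of _ D]) (use d[OF DS] in \<open>simp add: D_def\<close>)
qed

lemma smooth_D: assumes "smooth f" shows "\<exists>f'. (\<forall>x. (f has_real_derivative f' x) (at x)) \<and> smooth f'"
proof -
  obtain D where D: "D 0 = f" "\<And>n x. (D n has_real_derivative D (Suc n) x) (at x)"
    using assms unfolding smooth_def by blast
  have "smooth (D 1)" unfolding smooth_def
    by (rule exI[of _ "\<lambda>n. D (Suc n)"]) (simp add: D)
  then show ?thesis using D by (intro exI[of _ "D 1"]) auto
qed

lemma smooth_iff: "smooth f \<longleftrightarrow> (\<exists>f'. (\<forall>x. (f has_real_derivative f' x) (at x)) \<and> smooth f')"
proof
  assume "\<exists>f'. (\<forall>x. (f has_real_derivative f' x) (at x)) \<and> smooth f'"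
  then obtain f' where f': "\<forall>x. (f has_real_derivative f' x) (at x)" "smooth f'" by blast
  show "smooth f"
  proof (rule smooth_coind[of f "insert f {h. smooth h}"])
    fix h assume "h \<in> insert f {h. smooth h}"
    then show "\<exists>h'\<in>insert f {h. smooth h}. \<forall>x. (h has_real_derivative h' x) (at x)"
      using f' smooth_D by blast
  qed simp
qed (use smooth_D in blast)

lemma smooth_const: "smooth (\<lambda>x. c)"
  by (rule smooth_coind[of _ "{\<lambda>x. c, \<lambda>x. 0}"]) auto

lemma smooth_add: assumes "smooth u" "smooth v" shows "smooth (\<lambda>x. u x + v x)"
proof (rule smooth_coind[of _ "{\<lambda>x. u x + v x | u v. smooth u \<and> smooth v}"])
  fix h assume "h \<in> {\<lambda>x. u x + v x | u v. smooth u \<and> smooth v}"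
  then obtain u v where h: "h = (\<lambda>x. u x + v x)" "smooth u" "smooth v" by blast
  obtain u' v' where "\<forall>x. (u has_real_derivative u' x) (at x)" "smooth u'"
    "\<forall>x. (v has_real_derivative v' x) (at x)" "smooth v'" using h smooth_D by metis
  then show "\<exists>h'\<in>{\<lambda>x. u x + v x | u v. smooth u \<and> smooth v}. \<forall>x. (h has_real_derivative h' x) (at x)"
    unfolding h by (intro bexI[of _ "\<lambda>x. u' x + v' x"]) (auto intro!: derivative_eq_intros)
qed (use assms in blast)

inductive_set PS :: "(real \<Rightarrow> real) set" where
  "smooth a \<Longrightarrow> smooth b \<Longrightarrow> (\<lambda>x. a x * b x) \<in> PS"
| "u \<in> PS \<Longrightarrow> v \<in> PS \<Longrightarrow> (\<lambda>x. u x + v x) \<in> PS"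

lemma PS_deriv: "h \<in> PS \<Longrightarrow> \<exists>h'\<in>PS. \<forall>x. (h has_real_derivative h' x) (at x)"
proof (induction rule: PS.induct)
  case (1 a b)
  obtain a' b' where "\<forall>x. (a has_real_derivative a' x) (at x)" "smooth a'"
    "\<forall>x. (b has_real_derivative b' x) (at x)" "smooth b'" using 1 smooth_D by metis
  then show ?case using 1
    by (intro bexI[of _ "\<lambda>x. a' x * b x + a x * b' x"])
       (auto intro!: derivative_eq_intros PS.intros)
next
  case (2 u v)
  then obtain u' v' where "u'\<in>PS" "v' \<in> PS" "\<forall>x. (u has_real_derivative u' x) (at x)"
    "\<forall>x. (v has_real_derivative v' x) (at x)" by blast
  then show ?case
    by (intro bexI[of _ "\<lambda>x. u' x + v' x"]) (auto intro!: derivative_eq_intros PS.intros)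
qed

lemma smooth_mult: assumes "smooth u" "smooth v" shows "smooth (\<lambda>x. u x * v x)"
  by (rule smooth_coind[OF _ PS_deriv]) (use assms PS.intros in auto)

lemma smooth_affine: assumes "smooth u" shows "smooth (\<lambda>x. u (c * x + t))"
proof (rule smooth_coind[of _ "{\<lambda>x. e * u (c * x + t) | e u. smooth u}"])
  fix h assume "h \<in> {\<lambda>x. e * u (c * x + t) | e u. smooth u}"
  then obtain e u where h: "h = (\<lambda>x. e * u (c * x + t))" "smooth u" by blast
  obtain u' where u': "\<forall>x. (u has_real_derivative u' x) (at x)" "smooth u'" using h smooth_D by metis
  have "((\<lambda>x. u (c*x+t)) has_real_derivative u' (c*x+t) * c) (at x)" for x
    by (rule DERIV_chain2[where f=u and g="\<lambda>x. c*x+t"]) (use u' in \<open>auto intro!: derivative_eq_intros\<close>)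
  then have "(h has_real_derivative e * c * u' (c * x + t)) (at x)" for x
    unfolding h by (rule DERIV_cmult[THEN DERIV_cong]) (auto simp: ac_simps)
  then show "\<exists>h'\<in>{\<lambda>x. e * u (c * x + t) | e u. smooth u}. \<forall>x. (h has_real_derivative h' x) (at x)"
    using u' by (intro bexI[of _ "\<lambda>x. (e*c) * u' (c * x + t)"]) auto
next
  show "(\<lambda>x. u (c * x + t)) \<in> {\<lambda>x. e * u (c * x + t) | e u. smooth u}"
    using assms by (intro CollectI exI[of _ 1] exI[of _ u]) auto
qed

definition nextp :: "real poly \<Rightarrow> real poly" where
  "nextp P = [:0,0,1:] * (P - pderiv P)"

definition psiP :: "real poly \<Rightarrow> real \<Rightarrow> real" where
  "psiP P x = (if x > 0 then poly P (1/x) * exp (-1/x) else 0)"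

lemma psiP_lim: "((\<lambda>t::real. poly P t * t / exp t) \<longlongrightarrow> 0) at_top"
proof -
  have e: "poly P t * t / exp t = (\<Sum>i\<le>degree P. coeff P i * (t ^ Suc i / exp t))" for t
  proof -
    have "poly P t * t = (\<Sum>i\<le>degree P. coeff P i * t ^ Suc i)"
      by (simp add: poly_altdef sum_distrib_left sum_distrib_right mult_ac)
    then show ?thesis by (simp add: Groups_Big.sum_divide_distrib)
  qed
  have l: "((\<lambda>x::real. x ^ Suc i / exp x) \<longlongrightarrow> 0) at_top" for i
    using tendsto_power_div_exp_0[of "Suc i"] by simp
  have "((\<lambda>t. \<Sum>i\<le>degree P. coeff P i * (t ^ Suc i / exp t)) \<longlongrightarrow> (\<Sum>i\<le>degree P. coeff P i * 0)) at_top"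
    by (intro tendsto_sum tendsto_mult tendsto_const l)
  then show ?thesis by (simp add: e)
qed

lemma psiP_deriv: "(psiP P has_real_derivative psiP (nextp P) x) (at x)"
proof -
  consider "x > 0" | "x < 0" | "x = 0" by linarith
  then show ?thesis
  proof cases
    case 1
    have "((\<lambda>x. poly P (1/x) * exp (-1/x)) has_real_derivative psiP (nextp P) x) (at x)"
      using 1 unfolding psiP_def nextp_def
      by (auto intro!: derivative_eq_intros DERIV_chain2[where f="poly P"] simp: field_simps power2_eq_square)
    then show ?thesis
      by (rule has_field_derivative_transform_within_open[where S="{0<..}"]) (use 1 in \<open>auto simp: psiP_def\<close>)
  next
    case 2
    have "((\<lambda>x. 0) has_real_derivative psiP (nextp P) x) (at x)"
      using 2 by (auto simp: psiP_def)
    then show ?thesis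
      by (rule has_field_derivative_transform_within_open[where S="{..<0}"]) (use 2 in \<open>auto simp: psiP_def\<close>)
  next
    case 3
    have "((\<lambda>y. (psiP P y - psiP P 0) / (y - 0)) \<longlongrightarrow> 0) (at 0)"
    proof (rule filterlim_split_at)
      show "((\<lambda>y. (psiP P y - psiP P 0) / (y - 0)) \<longlongrightarrow> 0) (at_left 0)"
        by (rule tendsto_eventually) (auto simp: psiP_def eventually_at_left_field intro: exI[of _ "-1"])
      have "((\<lambda>y. (psiP P (inverse y) - psiP P 0) / (inverse y - 0)) \<longlongrightarrow> 0) at_top"
      proof (rule Lim_transform_eventually[OF psiP_lim[of P]])
        show "\<forall>\<^sub>F t in at_top. poly P t * t / exp t = (psiP P (inverse t) - psiP P 0) / (inverse t - 0)"
          using eventually_gt_at_top[of 0]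
          by eventually_elim (auto simp: psiP_def exp_minus field_simps)
      qed
      then show "((\<lambda>y. (psiP P y - psiP P 0) / (y - 0)) \<longlongrightarrow> 0) (at_right 0)"
        by (simp add: filterlim_at_right_to_top)
    qed
    then show ?thesis using 3 by (simp add: has_field_derivative_iff psiP_def)
  qed
qed

definition psi :: "real \<Rightarrow> real" where "psi x = (if x > 0 then exp (-1/x) else 0)"

lemma smooth_psi: "smooth psi"
proof -
  have "psi = psiP 1" by (auto simp: psi_def psiP_def fun_eq_iff)
  moreover have "smooth (psiP 1)"
    by (rule smooth_coind[of _ "range psiP"]) (use psiP_deriv in auto)
  ultimately show ?thesis by simp
qed

lemma psi_nonneg: "psi x \<ge> 0" and psi_pos: "x > 0 \<Longrightarrow> psi x > 0" and psi_zero: "x \<le> 0 \<Longrightarrow> psi x = 0"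
  by (auto simp: psi_def)

lemma smooth_imp_deriv: "smooth f \<Longrightarrow> (f has_real_derivative deriv f x) (at x)"
  using smooth_D DERIV_imp_deriv by (metis DERIV_deriv_iff_real_differentiable real_differentiable_def)

lemma smooth_cont: "smooth f \<Longrightarrow> continuous_on S f"
  by (meson DERIV_isCont continuous_at_imp_continuous_on smooth_D)

definition eta :: "real \<Rightarrow> real" where "eta x = psi x * psi (1 - x)"

lemma smooth_eta: "smooth eta"
  unfolding eta_def using smooth_mult[OF smooth_psi smooth_affine[OF smooth_psi, of "-1" 1]] by simp

lemma eta_nonneg: "eta x \<ge> 0" and eta_zero: "x \<le> 0 \<or> x \<ge> 1 \<Longrightarrow> eta x = 0"
  and eta_pos: "0 < x \<Longrightarrow> x < 1 \<Longrightarrow> eta x > 0"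
  by (auto simp: eta_def psi_def)

lemma eta_cont: "continuous_on S eta" by (rule smooth_cont[OF smooth_eta])

lemma eta_int: "eta integrable_on {a..b}"
  by (rule integrable_continuous_interval[OF eta_cont])

lemma integral_eta_zero: "(\<And>x. x \<in> {a..b} \<Longrightarrow> eta x = 0) \<Longrightarrow> integral {a..b} eta = 0"
  by (metis (no_types, lifting) integral_0 integral_cong)

definition sig :: "real \<Rightarrow> real" where "sig y = integral {0..y} eta"

lemma sig_shift: assumes "a \<le> 0" shows "integral {a..y} eta = sig y"
proof (cases "y \<le> 0")
  case True
  have "integral {a..y} eta = 0" by (rule integral_eta_zero) (use eta_zero True in auto)
  moreover have "integral {0..y} eta = 0" by (rule integral_eta_zero) (use eta_zero True in auto)
  ultimately show ?thesis unfolding sig_def by simp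
next
  case False
  have "integral {a..0} eta + integral {0..y} eta = integral {a..y} eta"
    by (rule Henstock_Kurzweil_Integration.integral_combine) (use assms False eta_int in auto)
  moreover have "integral {a..0} eta = 0" by (rule integral_eta_zero) (use eta_zero in auto)
  ultimately show ?thesis by (simp add: sig_def)
qed

lemma sig_deriv: "(sig has_real_derivative eta x) (at x)"
proof -
  define a where "a = - \<bar>x\<bar> - 1"
  define b where "b = \<bar>x\<bar> + 1"
  have "((\<lambda>u. integral {a..u} eta) has_real_derivative eta x) (at x within {a..b})"
    by (rule integral_has_real_derivative[OF eta_cont]) (auto simp: a_def b_def)
  moreover have "at x within {a..b} = at x" by (rule at_within_Icc_at) (auto simp: a_def b_def)
  moreover have "(\<lambda>u. integral {a..u} eta) = sig" using sig_shift[of a] by (auto simp: a_def)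
  ultimately show ?thesis by simp
qed

lemma sig_zero: "y \<le> 0 \<Longrightarrow> sig y = 0"
  unfolding sig_def by (rule integral_eta_zero) (use eta_zero in auto)

lemma sig_one: assumes "y \<ge> 1" shows "sig y = sig 1"
proof -
  have "integral {0..1} eta + integral {1..y} eta = integral {0..y} eta"
    by (rule Henstock_Kurzweil_Integration.integral_combine) (use assms eta_int in auto)
  moreover have "integral {1..y} eta = 0" by (rule integral_eta_zero) (use eta_zero in auto)
  ultimately show ?thesis by (simp add: sig_def)
qed

lemma sig_mono: "x \<le> y \<Longrightarrow> sig x \<le> sig y"
  by (rule DERIV_nonneg_imp_nondecreasing[where f=sig]) (assumption, blast intro: sig_deriv eta_nonneg)

lemma sig_pos: "sig 1 > 0"
proof (rule ccontr)
  assume "\<not> sig 1 > 0"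
  then have "sig 1 \<le> 0" by simp
  have z: "sig y = 0" if "y \<in> {0<..<1}" for y
    using sig_mono[of 0 y] sig_mono[of y 1] sig_zero[of 0] that \<open>sig 1 \<le> 0\<close> by auto
  have "((\<lambda>y. 0) has_real_derivative 0) (at (1/2))" by simp
  then have "(sig has_real_derivative 0) (at (1/2))"
    by (rule has_field_derivative_transform_within_open[where S="{0<..<1}"]) (use z in auto)
  moreover have "(sig has_real_derivative eta (1/2)) (at (1/2))" by (rule sig_deriv)
  ultimately have "eta (1/2) = 0" using DERIV_unique by blast
  with eta_pos[of "1/2"] show False by simp
qed

definition cst :: real where "cst = sig 1"
definition step :: "real \<Rightarrow> real" where "step x = sig x / cst"

lemma cst_pos: "cst > 0" using sig_pos by (simp add: cst_def)

lemma step_deriv: "(step has_real_derivative eta x / cst) (at x)"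
  unfolding step_def using DERIV_cdivide[OF sig_deriv, where c=cst] by simp

lemma smooth_step: "smooth step"
proof -
  have "smooth (\<lambda>x. (1/cst) * eta (1 * x + 0))"
    by (rule smooth_mult[OF smooth_const smooth_affine[OF smooth_eta]])
  then show ?thesis using step_deriv by (subst smooth_iff) (auto intro!: exI[of _ "\<lambda>x. (1/cst) * eta (1 * x + 0)"])
qed

lemma step_zero: "x \<le> 0 \<Longrightarrow> step x = 0"
  by (simp add: step_def sig_zero)
lemma step_one: "x \<ge> 1 \<Longrightarrow> step x = 1"
  using cst_pos by (simp add: step_def sig_one[of x] cst_def)
lemma step_ge0: "step x \<ge> 0"
proof -
  have "sig x \<ge> 0"
  proof (cases "x \<le> 0")
    case True then show ?thesis by (simp add: sig_zero)
  next
    case False then show ?thesis using sig_mono[of 0 x] sig_zero[of 0] by simp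
  qed
  then show ?thesis using cst_pos by (simp add: step_def)
qed
lemma step_le1: "step x \<le> 1"
proof -
  have "sig x \<le> sig 1"
  proof (cases "x \<le> 1")
    case True then show ?thesis using sig_mono[of x 1] by simp
  next
    case False then show ?thesis using sig_one[of x] by simp
  qed
  then show ?thesis using cst_pos by (simp add: step_def cst_def)
qed

lemma eta_ind: "eta x = indicator {0..1} x *\<^sub>R eta x"
  by (cases "x \<le> 0 \<or> x \<ge> 1") (auto simp: eta_zero indicator_def)

lemma eta_integrable: "integrable lborel eta"
proof -
  have "(\<lambda>x. indicator {0..1} x *\<^sub>R eta x) = eta" using eta_ind by (auto simp: fun_eq_iff)
  then show ?thesis using borel_integrable_compact[OF compact_Icc eta_cont, of 0 1] by simp
qed

lemma eta_lint: "(\<integral>x. eta x \<partial>lborel) = cst"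
proof -
  have "(\<integral>x. eta x \<partial>lborel) = integral UNIV eta" using integral_lborel[OF eta_integrable] by simp
  also have "\<dots> = integral UNIV (\<lambda>x. if x \<in> {0..1} then eta x else 0)"
    by (rule arg_cong[where f="integral UNIV"]) (use eta_zero in \<open>auto simp: fun_eq_iff\<close>)
  also have "\<dots> = cst" by (subst integral_restrict_UNIV) (simp add: cst_def sig_def)
  finally show ?thesis .
qed

definition tf :: "real \<Rightarrow> real \<Rightarrow> real \<Rightarrow> real \<Rightarrow> real" where
  "tf a b c x = step (c * x + (1 - c * a)) * step ((- c) * x + (1 + c * b))"

lemma tf_smooth: "smooth (tf a b c)"
  unfolding tf_def by (intro smooth_mult smooth_affine smooth_step)

lemma tf_zero: assumes "c \<ge> 1" "x < a - 1 \<or> x > b + 1" shows "tf a b c x = 0"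
proof (cases "x < a - 1")
  case True
  have "c * x + (1 - c * a) \<le> 0"
  proof -
    have "c * (a - x) \<ge> 1 * 1" using assms True by (intro mult_mono) auto
    then show ?thesis by (simp add: algebra_simps)
  qed
  then show ?thesis by (simp add: tf_def step_zero)
next
  case False
  then have "x > b + 1" using assms by auto
  have "(- c) * x + (1 + c * b) \<le> 0"
  proof -
    have "c * (x - b) \<ge> 1 * 1" using assms \<open>x > b + 1\<close> by (intro mult_mono) auto
    then show ?thesis by (simp add: algebra_simps)
  qed
  then show ?thesis by (simp add: tf_def step_zero)
qed

lemma tf_test: assumes "c \<ge> 1" shows "test_fun (tf a b c)"
proof -
  have "{x. tf a b c x \<noteq> 0} \<subseteq> {a-1..b+1}" using tf_zero[OF assms] by force
  then have "bounded {x. tf a b c x \<noteq> 0}" by (rule bounded_subset[OF bounded_closed_interval])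
  then show ?thesis using tf_smooth unfolding test_fun_def smooth_def by blast
qed

lemma tf_bounds: "0 \<le> tf a b c x" "tf a b c x \<le> 1"
  unfolding tf_def using step_ge0 step_le1 by (auto intro: mult_nonneg_nonneg mult_le_one)

lemma tf_one: assumes "c \<ge> 0" "a \<le> x" "x \<le> b" shows "tf a b c x = 1"
proof -
  have "c * x + (1 - c * a) \<ge> 1" "(- c) * x + (1 + c * b) \<ge> 1"
    using assms mult_left_mono[of a x c] mult_left_mono[of x b c] by (auto simp: algebra_simps)
  then show ?thesis by (simp add: tf_def step_one)
qed

lemma tf_deriv: assumes "c > 0" "a \<le> b"
  shows "deriv (tf a b c) x = c * (eta (c * x + (1 - c * a)) - eta ((- c) * x + (1 + c * b))) / cst"
proof -
  let ?A = "c * x + (1 - c * a)" and ?B = "(- c) * x + (1 + c * b)"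
  have d1: "((\<lambda>x. step (c * x + (1 - c * a))) has_real_derivative eta ?A / cst * c) (at x)"
    by (rule DERIV_chain2[OF step_deriv]) (auto intro!: derivative_eq_intros)
  have d2: "((\<lambda>x. step ((- c) * x + (1 + c * b))) has_real_derivative eta ?B / cst * (- c)) (at x)"
    by (rule DERIV_chain2[OF step_deriv]) (auto intro!: derivative_eq_intros)
  have d: "(tf a b c has_real_derivative
      (eta ?A / cst * c) * step ?B + step ?A * (eta ?B / cst * (- c))) (at x)"
    unfolding tf_def[abs_def] using DERIV_mult[OF d1 d2] by (simp add: algebra_simps)
  have 1: "eta ?A * step ?B = eta ?A"
  proof (cases "eta ?A = 0")
    case False
    then have "?A < 1" by (meson eta_zero not_le)
    then have "c * (x - a) < 0" by (simp add: algebra_simps)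
    then have "x < a" using assms by (simp add: mult_less_0_iff)
    then have "?B \<ge> 1" using assms mult_left_mono[of x b c] by (auto simp: algebra_simps)
    then show ?thesis by (simp add: step_one)
  qed simp
  have 2: "step ?A * eta ?B = eta ?B"
  proof (cases "eta ?B = 0")
    case False
    then have "?B < 1" by (meson eta_zero not_le)
    then have "c * (b - x) < 0" by (simp add: algebra_simps)
    then have "x > b" using assms by (simp add: mult_less_0_iff)
    then have "?A \<ge> 1" using assms mult_left_mono[of a x c] by (auto simp: algebra_simps)
    then show ?thesis by (simp add: step_one)
  qed simp
  have "(eta ?A / cst * c) * step ?B + step ?A * (eta ?B / cst * (- c))
      = c * (eta ?A * step ?B - step ?A * eta ?B) / cst" using cst_pos by (simp add: field_simps)
  also have "\<dots> = c * (eta ?A - eta ?B) / cst" by (simp only: 1 2)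
  finally show ?thesis using DERIV_imp_deriv[OF d] by simp
qed

lemma eta_meas[measurable]: "eta \<in> borel_measurable borel"
  by (rule borel_measurable_continuous_onI[OF eta_cont])

lemma aff1: assumes "c > 0"
  shows "(\<integral>x. f x * eta (c * x + (1 - c * a)) \<partial>lborel) = (1/c) * (\<integral>y. f (a + (y - 1)/c) * eta y \<partial>lborel)"
proof -
  have "(\<integral>x. f x * eta (c * x + (1 - c * a)) \<partial>lborel) =
     \<bar>1/c\<bar> *\<^sub>R (\<integral>y. f (a - 1/c + (1/c) * y) * eta (c * (a - 1/c + (1/c) * y) + (1 - c * a)) \<partial>lborel)"
    by (rule lborel_integral_real_affine) (use assms in auto)
  also have "(\<lambda>y. f (a - 1/c + (1/c) * y) * eta (c * (a - 1/c + (1/c) * y) + (1 - c * a))) =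
      (\<lambda>y. f (a + (y - 1)/c) * eta y)"
  proof
    fix y
    have e1: "a - 1/c + (1/c) * y = a + (y - 1)/c" using assms by (simp add: field_simps)
    have e2: "c * (a - 1/c + (1/c) * y) + (1 - c * a) = y" using assms by (simp add: field_simps)
    show "f (a - 1/c + (1/c) * y) * eta (c * (a - 1/c + (1/c) * y) + (1 - c * a)) =
      f (a + (y - 1)/c) * eta y" by (simp only: e2, simp only: e1)
  qed
  finally show ?thesis using assms by simp
qed

lemma aff2: assumes "c > 0"
  shows "(\<integral>x. f x * eta ((- c) * x + (1 + c * b)) \<partial>lborel) = (1/c) * (\<integral>y. f (b + (1 - y)/c) * eta y \<partial>lborel)"
proof -
  have "(\<integral>x. f x * eta ((- c) * x + (1 + c * b)) \<partial>lborel) =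
     \<bar>-1/c\<bar> *\<^sub>R (\<integral>y. f (b + 1/c + (-1/c) * y) * eta ((- c) * (b + 1/c + (-1/c) * y) + (1 + c * b)) \<partial>lborel)"
    by (rule lborel_integral_real_affine) (use assms in auto)
  also have "(\<lambda>y. f (b + 1/c + (-1/c) * y) * eta ((- c) * (b + 1/c + (-1/c) * y) + (1 + c * b))) =
      (\<lambda>y. f (b + (1 - y)/c) * eta y)"
  proof
    fix y
    have e1: "b + 1/c + (-1/c) * y = b + (1 - y)/c" using assms by (simp add: field_simps)
    have e2: "(- c) * (b + 1/c + (-1/c) * y) + (1 + c * b) = y" using assms by (simp add: field_simps)
    show "f (b + 1/c + (-1/c) * y) * eta ((- c) * (b + 1/c + (-1/c) * y) + (1 + c * b)) =
      f (b + (1 - y)/c) * eta y" by (simp only: e2, simp only: e1)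
  qed
  finally show ?thesis using assms by simp
qed

lemma lim_aff:
  assumes "isCont f a" "\<And>x. \<bar>f x\<bar> \<le> B" and [measurable]: "f \<in> borel_measurable borel" "h \<in> borel_measurable borel"
  shows "(\<lambda>n. \<integral>y. f (a + h y / real (Suc n)) * eta y \<partial>lborel) \<longlonglongrightarrow> f a * cst"
proof -
  have "(\<lambda>n. \<integral>y. f (a + h y / real (Suc n)) * eta y \<partial>lborel) \<longlonglongrightarrow> (\<integral>y. f a * eta y \<partial>lborel)"
  proof (rule integral_dominated_convergence[where w="\<lambda>y. B * eta y"])
    show "integrable lborel (\<lambda>y. B * eta y)" using eta_integrable by simp
    show "AE y in lborel. (\<lambda>n. f (a + h y / real (Suc n)) * eta y) \<longlonglongrightarrow> f a * eta y"
    proof (rule AE_I2)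
      fix y
      have "(\<lambda>n. a + h y * inverse (real (Suc n))) \<longlonglongrightarrow> a + h y * 0"
        by (intro tendsto_intros LIMSEQ_inverse_real_of_nat)
      then have "(\<lambda>n. f (a + h y / real (Suc n))) \<longlonglongrightarrow> f a"
        using isCont_tendsto_compose[OF assms(1)] by (simp add: divide_inverse)
      then show "(\<lambda>n. f (a + h y / real (Suc n)) * eta y) \<longlonglongrightarrow> f a * eta y"
        by (intro tendsto_intros)
    qed
    show "AE y in lborel. norm (f (a + h y / real (Suc n)) * eta y) \<le> B * eta y" for n
    proof (rule AE_I2)
      fix y
      show "norm (f (a + h y / real (Suc n)) * eta y) \<le> B * eta y"
        using assms(2)[of "a + h y / real (Suc n)"] eta_nonneg[of y]
        by (simp add: abs_mult mult_right_mono)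
    qed
  qed measurable
  then show ?thesis using eta_lint by simp
qed

lemma tf_lim: assumes "a \<le> b" shows "(\<lambda>n. tf a b (real (Suc n)) x) \<longlonglongrightarrow> indicator {a..b} x"
proof -
  consider "x < a" | "a \<le> x \<and> x \<le> b" | "x > b" by linarith
  then show ?thesis
  proof cases
    case 1
    obtain N :: nat where N: "real N > 1 / (a - x)" using reals_Archimedean2 by blast
    have "eventually (\<lambda>n. tf a b (real (Suc n)) x = 0) sequentially"
      unfolding eventually_sequentially
    proof (intro exI allI impI)
      fix n assume "N \<le> n"
      then have "real (Suc n) > 1 / (a - x)" using N by linarith
      then have "real (Suc n) * (a - x) > 1" using 1 by (simp add: field_simps)
      then have "real (Suc n) * x + (1 - real (Suc n) * a) \<le> 0" by (simp add: algebra_simps)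
      then show "tf a b (real (Suc n)) x = 0" by (simp add: tf_def step_zero)
    qed
    then show ?thesis using 1 by (simp add: tendsto_eventually)
  next
    case 2
    then show ?thesis by (simp add: tf_one)
  next
    case 3
    obtain N :: nat where N: "real N > 1 / (x - b)" using reals_Archimedean2 by blast
    have "eventually (\<lambda>n. tf a b (real (Suc n)) x = 0) sequentially"
      unfolding eventually_sequentially
    proof (intro exI allI impI)
      fix n assume "N \<le> n"
      then have "real (Suc n) > 1 / (x - b)" using N by linarith
      then have "real (Suc n) * (x - b) > 1" using 3 by (simp add: field_simps)
      then have "(- real (Suc n)) * x + (1 + real (Suc n) * b) \<le> 0" by (simp add: algebra_simps)
      then show "tf a b (real (Suc n)) x = 0" by (simp add: tf_def step_zero)
    qed
    then show ?thesis using 3 by (simp add: tendsto_eventually)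
  qed
qed

lemma int_f_eta:
  assumes [measurable]: "f \<in> borel_measurable borel" and fb: "\<And>x. \<bar>f x\<bar> \<le> B" and c: "c \<noteq> 0"
  shows "integrable lborel (\<lambda>x. f x * eta (c * x + t))"
proof (rule Bochner_Integration.integrable_bound[where f="\<lambda>x. B * eta (c * x + t)"])
  show "integrable lborel (\<lambda>x. B * eta (c * x + t))"
    using lborel_integrable_real_affine[OF eta_integrable c, of t] by (simp add: add.commute)
  show "AE x in lborel. norm (f x * eta (c * x + t)) \<le> norm (B * eta (c * x + t))"
  proof (rule AE_I2)
    fix x
    have "B \<ge> 0" using fb[of 0] by linarith
    then show "norm (f x * eta (c * x + t)) \<le> norm (B * eta (c * x + t))"
      using fb[of x] eta_nonneg[of "c*x+t"] by (simp add: abs_mult mult_right_mono)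
  qed
qed measurable

lemma weak_ftc:
  assumes wd: "weak_deriv f g" and fc: "\<And>x. isCont f x"
    and fm[measurable]: "f \<in> borel_measurable borel" and fb: "\<And>x. \<bar>f x\<bar> \<le> B"
    and gm[measurable]: "g \<in> borel_measurable borel" and gi: "\<And>a b. set_integrable lborel {a..b} g"
    and ab: "a \<le> b"
  shows "f b - f a = (LINT x:{a..b}|lborel. g x)"
proof -
  define c where "c n = real (Suc n)" for n
  have c1: "c n \<ge> 1" "c n > 0" for n by (auto simp: c_def)
  have eq: "(\<integral>x. f x * deriv (tf a b (c n)) x \<partial>lborel) = - (\<integral>x. g x * tf a b (c n) x \<partial>lborel)" for n
    using wd tf_test[OF c1(1)] unfolding weak_deriv_def by blast
  have L: "(\<integral>x. f x * deriv (tf a b (c n)) x \<partial>lborel) =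
     ((\<integral>y. f (a + (y - 1)/c n) * eta y \<partial>lborel) - (\<integral>y. f (b + (1 - y)/c n) * eta y \<partial>lborel)) / cst" for n
  proof -
    have "(\<integral>x. f x * deriv (tf a b (c n)) x \<partial>lborel) =
       (\<integral>x. (c n / cst) * (f x * eta (c n * x + (1 - c n * a))) - (c n / cst) * (f x * eta ((- c n) * x + (1 + c n * b))) \<partial>lborel)"
      using cst_pos by (intro Bochner_Integration.integral_cong) (auto simp: tf_deriv[OF c1(2) ab] field_simps)
    also have "\<dots> = (c n / cst) * (\<integral>x. f x * eta (c n * x + (1 - c n * a)) \<partial>lborel) - (c n / cst) * (\<integral>x. f x * eta ((- c n) * x + (1 + c n * b)) \<partial>lborel)"
      using int_f_eta[OF fm fb, of "c n"] int_f_eta[OF fm fb, of "- c n"] c1[of n] by simp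
    also have "\<dots> = ((\<integral>y. f (a + (y - 1)/c n) * eta y \<partial>lborel) - (\<integral>y. f (b + (1 - y)/c n) * eta y \<partial>lborel)) / cst"
      unfolding aff1[OF c1(2)] aff2[OF c1(2)] using c1[of n] cst_pos by (simp add: field_simps)
    finally show ?thesis .
  qed
  have LL: "(\<lambda>n. (\<integral>x. f x * deriv (tf a b (c n)) x \<partial>lborel)) \<longlonglongrightarrow> (f a * cst - f b * cst) / cst"
  proof -
    have 1: "(\<lambda>n. \<integral>y. f (a + (y - 1) / real (Suc n)) * eta y \<partial>lborel) \<longlonglongrightarrow> f a * cst"
      by (rule lim_aff[OF fc fb]) measurable
    have 2: "(\<lambda>n. \<integral>y. f (b + (1 - y) / real (Suc n)) * eta y \<partial>lborel) \<longlonglongrightarrow> f b * cst"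
      by (rule lim_aff[OF fc fb]) measurable
    show ?thesis unfolding L unfolding c_def
      by (intro tendsto_intros 1 2) (use cst_pos in auto)
  qed
  have R: "(\<lambda>n. \<integral>x. g x * tf a b (c n) x \<partial>lborel) \<longlonglongrightarrow> (\<integral>x. g x * indicator {a..b} x \<partial>lborel)"
  proof (rule integral_dominated_convergence[where w="\<lambda>x. indicator {a-1..b+1} x * \<bar>g x\<bar>"])
    show "integrable lborel (\<lambda>x. indicator {a-1..b+1} x * \<bar>g x\<bar>)"
      using integrable_norm[OF gi[of "a-1" "b+1", unfolded set_integrable_def]]
      by (simp add: abs_mult)
    show "AE x in lborel. (\<lambda>n. g x * tf a b (c n) x) \<longlonglongrightarrow> g x * indicator {a..b} x"
      by (rule AE_I2) (unfold c_def, intro tendsto_intros tf_lim ab)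
    show "AE x in lborel. norm (g x * tf a b (c n) x) \<le> indicator {a-1..b+1} x * \<bar>g x\<bar>" for n
    proof (rule AE_I2)
      fix x
      show "norm (g x * tf a b (c n) x) \<le> indicator {a-1..b+1} x * \<bar>g x\<bar>"
      proof (cases "x \<in> {a-1..b+1}")
        case True
        then show ?thesis using tf_bounds[of a b "c n" x]
          by (simp add: abs_mult mult_left_le)
      next
        case False
        then show ?thesis using tf_zero[OF c1(1), of x a b] by auto
      qed
    qed
  next
    have "(\<lambda>x. tf a b (c n) x) \<in> borel_measurable borel" for n
      by (rule borel_measurable_continuous_onI[OF smooth_cont[OF tf_smooth]])
    then show "(\<lambda>x. g x * tf a b (c n) x) \<in> borel_measurable lborel" for n by simp
  qed measurable
  have "(\<lambda>n. (\<integral>x. f x * deriv (tf a b (c n)) x \<partial>lborel)) \<longlonglongrightarrow> - (\<integral>x. g x * indicator {a..b} x \<partial>lborel)"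
    unfolding eq by (intro tendsto_intros R)
  with LL have "(f a * cst - f b * cst) / cst = - (\<integral>x. g x * indicator {a..b} x \<partial>lborel)"
    using LIMSEQ_unique by blast
  moreover have "(f a * cst - f b * cst) / cst = f a - f b"
    using cst_pos by (simp add: left_diff_distrib[symmetric])
  ultimately have "f b - f a = (\<integral>x. g x * indicator {a..b} x \<partial>lborel)" by linarith
  then show ?thesis by (simp add: set_lebesgue_integral_def mult.commute)
qed

lemma lborel_Iic_infinite: "emeasure lborel {..(A::real)} = \<infinity>"
proof (rule ccontr)
  assume "emeasure lborel {..A} \<noteq> \<infinity>"
  then have e: "emeasure lborel {..A} = ennreal (measure lborel {..A})"
    by (simp add: emeasure_eq_ennreal_measure)
  define m where "m = measure lborel {..A}"
  have m0: "m \<ge> 0" by (simp add: m_def)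
  have "emeasure lborel {A - (m+1)..A} \<le> emeasure lborel {..A}"
    by (rule emeasure_mono) auto
  also have "emeasure lborel {A - (m+1)..A} = ennreal (m + 1)" using m0 by simp
  finally have "m + 1 \<le> m" using e m0 by (simp add: m_def)
  then show False by simp
qed

lemma weak_global:
  assumes wd: "weak_deriv f g" and fc: "\<And>x. isCont f x"
    and fm[measurable]: "f \<in> borel_measurable borel" and fb: "\<And>x. \<bar>f x\<bar> \<le> B"
    and gm[measurable]: "g \<in> borel_measurable borel" and gi: "\<And>a b. set_integrable lborel {a..b} g"
    and fI: "integrable lborel f" and gI: "integrable lborel g"
  shows "f p = (LINT x:{..p}|lborel. g x)"
proof -
  have gS: "set_integrable lborel {..p} g" unfolding set_integrable_def
    by (rule integrable_mult_indicator) (use gI in auto)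
  have T: "((\<lambda>a. LINT x:{a..p}|lborel. g x) \<longlongrightarrow> (LINT x:{..p}|lborel. g x)) at_bot"
    by (rule tendsto_set_lebesgue_integral_at_bot[OF _ gS]) auto
  define L where "L = f p - (LINT x:{..p}|lborel. g x)"
  have ev: "eventually (\<lambda>a. f p - (LINT x:{a..p}|lborel. g x) = f a) at_bot"
    unfolding eventually_at_bot_linorder
    by (rule exI[of _ p]) (use weak_ftc[OF wd fc fm fb gm gi] in force)
  have "((\<lambda>a. f p - (LINT x:{a..p}|lborel. g x)) \<longlongrightarrow> L) at_bot"
    unfolding L_def by (intro tendsto_intros T)
  then have fL: "(f \<longlongrightarrow> L) at_bot" using ev by (rule Lim_transform_eventually)
  have "L = 0"
  proof (rule ccontr)
    assume "L \<noteq> 0"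
    have "((\<lambda>a. \<bar>f a\<bar>) \<longlongrightarrow> \<bar>L\<bar>) at_bot" by (intro tendsto_intros fL)
    moreover have "\<bar>L\<bar>/2 < \<bar>L\<bar>" using \<open>L \<noteq> 0\<close> by simp
    ultimately have "eventually (\<lambda>a. \<bar>L\<bar>/2 < \<bar>f a\<bar>) at_bot" by (rule order_tendstoD(1))
    then obtain A where A: "\<And>a. a \<le> A \<Longrightarrow> \<bar>L\<bar>/2 < \<bar>f a\<bar>"
      unfolding eventually_at_bot_linorder by blast
    have "integrable lborel (\<lambda>x. (\<bar>L\<bar>/2) * indicator {..A} x)"
    proof (rule Bochner_Integration.integrable_bound[where f=f])
      show "AE x in lborel. norm ((\<bar>L\<bar>/2) * indicator {..A} x) \<le> norm (f x)"
        by (rule AE_I2) (use A in \<open>auto simp: indicator_def less_imp_le\<close>)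
    qed (use fI in auto)
    then have "integrable lborel (\<lambda>x. (2/\<bar>L\<bar>) * ((\<bar>L\<bar>/2) * indicator {..A} x))"
      by (rule integrable_mult_right)
    moreover have "(\<lambda>x. (2/\<bar>L\<bar>) * ((\<bar>L\<bar>/2) * indicator {..A} x)) = (indicator {..A} :: real \<Rightarrow> real)"
      using \<open>L \<noteq> 0\<close> by (auto simp: fun_eq_iff)
    ultimately have "integrable lborel (indicator {..A} :: real \<Rightarrow> real)" by simp
    then show False using lborel_Iic_infinite[of A] by (simp add: integrable_indicator_iff)
  qed
  then show ?thesis by (simp add: L_def)
qed

lemma leb_to_lborel:
  fixes f :: "real \<Rightarrow> real"
  assumes "integrable lebesgue f" "f \<in> borel_measurable borel"
  shows "integrable lborel f"
  using assms integrable_completion[of f lborel] by simp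

lemma int_powr_01: assumes "e > -1" shows "integrable lborel (\<lambda>h::real. indicator {0<..1} h * h powr e)"
proof (rule leb_to_lborel)
  show "integrable lebesgue (\<lambda>h::real. indicator {0<..1} h * h powr e)"
    using nonnegative_absolutely_integrable_1[OF integrable_on_powr_from_0'[OF assms, of 1]]
    unfolding set_integrable_def by simp
qed measurable

lemma int_powr_1inf: assumes "e < -1" shows "integrable lborel (\<lambda>h::real. indicator {1..} h * h powr e)"
proof (rule leb_to_lborel)
  have "(\<lambda>h::real. h powr e) integrable_on {1..}"
    using has_integral_powr_to_inf[OF assms, of 1] by (auto simp: integrable_on_def)
  then show "integrable lebesgue (\<lambda>h::real. indicator {1..} h * h powr e)"
    using nonnegative_absolutely_integrable_1[of "\<lambda>h::real. h powr e" "{1..}"]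
    unfolding set_integrable_def by simp
qed measurable

lemma int_reflect: "integrable lborel (f::real\<Rightarrow>real) \<Longrightarrow> integrable lborel (\<lambda>x. f (- x))"
  using lborel_integrable_real_affine[of f "-1" 0] by simp

definition Kf :: "real \<Rightarrow> (real \<Rightarrow> real) \<Rightarrow> real \<Rightarrow> real \<Rightarrow> real" where
  "Kf k \<rho> x h = \<rho> x * (sgn h * \<bar>h\<bar> powr (k - 1) * (\<rho> (x + h) - \<rho> x))"

definition phi :: "real \<Rightarrow> real \<Rightarrow> real \<Rightarrow> real \<Rightarrow> real \<Rightarrow> real" where
  "phi k \<alpha> C M h = C * (indicator {0<..1} h * h powr (k - 1 + \<alpha>) + indicator {0<..1} (-h) * (-h) powr (k - 1 + \<alpha>))
     + 2 * M * (indicator {1..} h * h powr (k - 1) + indicator {1..} (-h) * (-h) powr (k - 1))"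

lemma dS_alt: "dS k \<rho> x = - (\<integral>h. sgn h * \<bar>h\<bar> powr (k - 1) * (\<rho> (x + h) - \<rho> x) \<partial>lborel)"
proof -
  have "dS k \<rho> x = \<bar>1\<bar> *\<^sub>R (\<integral>h. Wk_deriv k (x - (x + 1 * h)) * (\<rho> (x + 1 * h) - \<rho> x) \<partial>lborel)"
    unfolding dS_def by (rule lborel_integral_real_affine) simp
  also have "\<dots> = (\<integral>h. - (sgn h * \<bar>h\<bar> powr (k - 1) * (\<rho> (x + h) - \<rho> x)) \<partial>lborel)"
    by (simp add: Wk_deriv_def sgn_minus)
  finally show ?thesis by simp
qed

lemma phi_nonneg: "C \<ge> 0 \<Longrightarrow> M \<ge> 0 \<Longrightarrow> phi k \<alpha> C M h \<ge> 0"
  unfolding phi_def by (intro add_nonneg_nonneg mult_nonneg_nonneg) (auto simp: indicator_def)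

lemma phi_int: assumes "-1 < k" "k < 0" "-k < \<alpha>" shows "integrable lborel (phi k \<alpha> C M)"
proof -
  have a: "integrable lborel (\<lambda>h::real. indicator {0<..1} h * h powr (k - 1 + \<alpha>))"
    by (rule int_powr_01) (use assms in auto)
  have b: "integrable lborel (\<lambda>h::real. indicator {1..} h * h powr (k - 1))"
    by (rule int_powr_1inf) (use assms in auto)
  show ?thesis unfolding phi_def[abs_def]
    by (intro Bochner_Integration.integrable_add Bochner_Integration.integrable_mult_right a b int_reflect[OF a] int_reflect[OF b])
qed

context
  fixes \<rho> :: "real \<Rightarrow> real" and k \<alpha> C M :: real
  assumes nn: "\<And>x. 0 \<le> \<rho> x" and bd: "\<And>x. \<rho> x \<le> M"
    and hold: "\<And>x y. \<bar>\<rho> x - \<rho> y\<bar> \<le> C * \<bar>x - y\<bar> powr \<alpha>"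
    and C0: "C \<ge> 0" and k: "-1 < k" "k < 0" and al: "-k < \<alpha>"
begin

lemma M0: "M \<ge> 0" using nn[of 0] bd[of 0] by linarith

lemma diff_bd: "\<bar>\<rho> (x + h) - \<rho> x\<bar> \<le> 2 * M"
  using nn[of x] bd[of x] nn[of "x+h"] bd[of "x+h"] by linarith

lemma diff_hold: "\<bar>\<rho> (x + h) - \<rho> x\<bar> \<le> C * \<bar>h\<bar> powr \<alpha>"
  using hold[of "x+h" x] by simp

lemma kern_bd: "\<bar>h\<bar> powr (k - 1) * \<bar>\<rho> (x + h) - \<rho> x\<bar> \<le> phi k \<alpha> C M h"
proof -
  let ?D = "\<bar>\<rho> (x + h) - \<rho> x\<bar>"
  have t: "0 \<le> C * (indicator {0<..1} h * h powr (k - 1 + \<alpha>))" "0 \<le> C * (indicator {0<..1} (-h) * (-h) powr (k - 1 + \<alpha>))"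
     "0 \<le> 2 * M * (indicator {1..} h * h powr (k - 1))" "0 \<le> 2 * M * (indicator {1..} (-h) * (-h) powr (k - 1))"
    using C0 M0 by (auto simp: indicator_def)
  have p: "phi k \<alpha> C M h = C * (indicator {0<..1} h * h powr (k - 1 + \<alpha>)) + C * (indicator {0<..1} (-h) * (-h) powr (k - 1 + \<alpha>))
     + (2 * M * (indicator {1..} h * h powr (k - 1)) + 2 * M * (indicator {1..} (-h) * (-h) powr (k - 1)))"
    unfolding phi_def by (simp add: algebra_simps)
  consider "h = 0" | "0 < \<bar>h\<bar> \<and> \<bar>h\<bar> \<le> 1" | "\<bar>h\<bar> > 1" by linarith
  then show ?thesis
  proof cases
    case 1 then show ?thesis using phi_nonneg[OF C0 M0] by simp
  next
    case 2
    have "\<bar>h\<bar> powr (k - 1) * ?D \<le> \<bar>h\<bar> powr (k - 1) * (C * \<bar>h\<bar> powr \<alpha>)"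
      by (intro mult_left_mono diff_hold) auto
    also have "\<dots> = C * \<bar>h\<bar> powr (k - 1 + \<alpha>)" by (simp add: powr_add)
    finally have *: "\<bar>h\<bar> powr (k - 1) * ?D \<le> C * \<bar>h\<bar> powr (k - 1 + \<alpha>)" .
    show ?thesis
    proof (cases "h > 0")
      case True
      then have "C * \<bar>h\<bar> powr (k - 1 + \<alpha>) = C * (indicator {0<..1} h * h powr (k - 1 + \<alpha>))"
        using 2 by (simp add: indicator_def)
      then show ?thesis using * t p by linarith
    next
      case False
      then have "C * \<bar>h\<bar> powr (k - 1 + \<alpha>) = C * (indicator {0<..1} (-h) * (-h) powr (k - 1 + \<alpha>))"
        using 2 by (simp add: indicator_def)
      then show ?thesis using * t p by linarith
    qed
  next
    case 3
    have "\<bar>h\<bar> powr (k - 1) * ?D \<le> \<bar>h\<bar> powr (k - 1) * (2 * M)"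
      by (intro mult_left_mono diff_bd) auto
    then have *: "\<bar>h\<bar> powr (k - 1) * ?D \<le> 2 * M * \<bar>h\<bar> powr (k - 1)" by (simp add: ac_simps)
    show ?thesis
    proof (cases "h > 0")
      case True
      then have "2 * M * \<bar>h\<bar> powr (k - 1) = 2 * M * (indicator {1..} h * h powr (k - 1))"
        using 3 by (simp add: indicator_def)
      then show ?thesis using * t p by linarith
    next
      case False
      then have "2 * M * \<bar>h\<bar> powr (k - 1) = 2 * M * (indicator {1..} (-h) * (-h) powr (k - 1))"
        using 3 by (simp add: indicator_def)
      then show ?thesis using * t p by linarith
    qed
  qed
qed

lemma Kf_bd: "\<bar>Kf k \<rho> x h\<bar> \<le> \<rho> x * phi k \<alpha> C M h"
proof -
  have "\<bar>Kf k \<rho> x h\<bar> = \<rho> x * (\<bar>sgn h\<bar> * (\<bar>h\<bar> powr (k - 1) * \<bar>\<rho> (x + h) - \<rho> x\<bar>))"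
    using nn[of x] by (simp add: Kf_def abs_mult)
  also have "\<dots> \<le> \<rho> x * (1 * phi k \<alpha> C M h)"
    using nn[of x] kern_bd[of h x] phi_nonneg[OF C0 M0, of k \<alpha> h]
    by (intro mult_left_mono mult_mono) (auto simp: abs_sgn_eq)
  finally show ?thesis by simp
qed

end

context
  fixes \<rho> :: "real \<Rightarrow> real" and k \<alpha> C M :: real
  assumes nn: "\<And>x. 0 \<le> \<rho> x" and bd: "\<And>x. \<rho> x \<le> M"
    and hold: "\<And>x y. \<bar>\<rho> x - \<rho> y\<bar> \<le> C * \<bar>x - y\<bar> powr \<alpha>"
    and C0: "C \<ge> 0" and k: "-1 < k" "k < 0" and al: "-k < \<alpha>"
    and rm[measurable]: "\<rho> \<in> borel_measurable borel"
    and ri: "integrable lborel \<rho>"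
begin

lemma Kf_bd': "\<bar>Kf k \<rho> x h\<bar> \<le> \<rho> x * phi k \<alpha> C M h"
  by (rule Kf_bd[OF nn bd hold C0 k al])

lemma M0': "M \<ge> 0" using nn[of 0] bd[of 0] by linarith

lemma phi_int': "integrable lborel (phi k \<alpha> C M)" by (rule phi_int[OF k al])

lemma phi_meas[measurable]: "phi k \<alpha> C M \<in> borel_measurable borel"
  unfolding phi_def[abs_def] by measurable

lemma Kf_meas[measurable]: "(\<lambda>(x,h). Kf k \<rho> x h) \<in> borel_measurable (lborel \<Otimes>\<^sub>M lborel)"
  unfolding Kf_def by measurable

lemma Kf_int_h: "integrable lborel (\<lambda>h. Kf k \<rho> x h)"
proof (rule Bochner_Integration.integrable_bound[where f="\<lambda>h. \<rho> x * phi k \<alpha> C M h"])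
  show "integrable lborel (\<lambda>h. \<rho> x * phi k \<alpha> C M h)" using phi_int' by simp
  show "AE h in lborel. norm (Kf k \<rho> x h) \<le> norm (\<rho> x * phi k \<alpha> C M h)"
    using Kf_bd'[of x] by (intro AE_I2) (metis abs_ge_self order_trans real_norm_def)
qed (unfold Kf_def, measurable)

definition "Phi = (\<integral>h. phi k \<alpha> C M h \<partial>lborel)"

lemma int_Kf_bd: "\<bar>\<integral>h. Kf k \<rho> x h \<partial>lborel\<bar> \<le> \<rho> x * Phi"
proof -
  have "\<bar>\<integral>h. Kf k \<rho> x h \<partial>lborel\<bar> \<le> (\<integral>h. \<rho> x * phi k \<alpha> C M h \<partial>lborel)"
    by (rule integral_abs_bound_integral[OF Kf_int_h]) (use phi_int' Kf_bd' in auto)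
  then show ?thesis by (simp add: Phi_def)
qed

lemma prod_int: "integrable (lborel \<Otimes>\<^sub>M lborel) (\<lambda>(x,h). indicator {..p} x * Kf k \<rho> x h)"
proof (rule lborel_pair.Fubini_integrable)
  show "(\<lambda>(x,h). indicator {..p} x * Kf k \<rho> x h) \<in> borel_measurable (lborel \<Otimes>\<^sub>M lborel)"
    unfolding Kf_def by measurable
  show "AE x in lborel. integrable lborel (\<lambda>h. case (x, h) of (x, h) \<Rightarrow> indicator {..p} x * Kf k \<rho> x h)"
    using Kf_int_h by (intro AE_I2) simp
  show "integrable lborel (\<lambda>x. \<integral>h. norm (case (x, h) of (x, h) \<Rightarrow> indicator {..p} x * Kf k \<rho> x h) \<partial>lborel)"
  proof (rule Bochner_Integration.integrable_bound[where f="\<lambda>x. \<rho> x * Phi"])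
    show "integrable lborel (\<lambda>x. \<rho> x * Phi)" using ri by simp
    show "AE x in lborel. norm (\<integral>h. norm (case (x, h) of (x, h) \<Rightarrow> indicator {..p} x * Kf k \<rho> x h) \<partial>lborel) \<le> norm (\<rho> x * Phi)"
    proof (rule AE_I2)
      fix x
      have i1: "integrable lborel (\<lambda>h. norm (indicator {..p} x * Kf k \<rho> x h))"
        using Kf_int_h[of x] by (intro integrable_norm) simp
      have "(\<integral>h. norm (indicator {..p} x * Kf k \<rho> x h) \<partial>lborel) \<le> (\<integral>h. \<rho> x * phi k \<alpha> C M h \<partial>lborel)"
        by (rule integral_mono[OF i1]) (use phi_int' Kf_bd'[of x] nn[of x] phi_nonneg[OF C0 M0', of k \<alpha>] in
            \<open>auto simp: indicator_def abs_mult intro: order_trans\<close>)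
      moreover have "0 \<le> (\<integral>h. norm (indicator {..p} x * Kf k \<rho> x h) \<partial>lborel)" by simp
      ultimately show "norm (\<integral>h. norm (case (x, h) of (x, h) \<Rightarrow> indicator {..p} x * Kf k \<rho> x h) \<partial>lborel) \<le> norm (\<rho> x * Phi)"
        using nn[of x] by (simp add: Phi_def)
    qed
  qed measurable
qed

end

lemma g_alt: "- chi * \<rho> x * dS k \<rho> x = chi * (\<integral>h. Kf k \<rho> x h \<partial>lborel)"
proof -
  have "- chi * \<rho> x * dS k \<rho> x = chi * (\<rho> x * (\<integral>h. sgn h * \<bar>h\<bar> powr (k - 1) * (\<rho> (x + h) - \<rho> x) \<partial>lborel))"
    by (simp add: dS_alt)
  also have "\<dots> = chi * (\<integral>h. Kf k \<rho> x h \<partial>lborel)"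
    unfolding Kf_def by simp
  finally show ?thesis .
qed

context
  fixes \<rho> :: "real \<Rightarrow> real" and k \<alpha> C M chi :: real
  assumes nn: "\<And>x. 0 \<le> \<rho> x" and bd: "\<And>x. \<rho> x \<le> M"
    and hold: "\<And>x y. \<bar>\<rho> x - \<rho> y\<bar> \<le> C * \<bar>x - y\<bar> powr \<alpha>"
    and C0: "C \<ge> 0" and k: "-1 < k" "k < 0" and al: "-k < \<alpha>"
    and rm[measurable]: "\<rho> \<in> borel_measurable borel"
    and ri: "integrable lborel \<rho>" and chi: "chi > 0"
begin

lemmas A = nn bd hold C0 k al rm ri

lemma intKf_meas[measurable]: "(\<lambda>x. \<integral>h. Kf k \<rho> x h \<partial>lborel) \<in> borel_measurable borel"
proof -
  have "(\<lambda>(x,h). Kf k \<rho> x h) \<in> borel_measurable (lborel \<Otimes>\<^sub>M lborel)" by (rule Kf_meas[OF A])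
  then have "(\<lambda>x. \<integral>h. Kf k \<rho> x h \<partial>lborel) \<in> borel_measurable lborel" by measurable
  then show ?thesis by simp
qed

definition "gg x = chi * (\<integral>h. Kf k \<rho> x h \<partial>lborel)"

lemma gg_meas[measurable]: "gg \<in> borel_measurable borel"
  unfolding gg_def[abs_def] by measurable

lemma gg_int: "integrable lborel gg"
proof (rule Bochner_Integration.integrable_bound[where f="\<lambda>x. chi * (\<rho> x * Phi k \<alpha> C M)"])
  show "integrable lborel (\<lambda>x. chi * (\<rho> x * Phi k \<alpha> C M))" using ri by simp
  show "AE x in lborel. norm (gg x) \<le> norm (chi * (\<rho> x * Phi k \<alpha> C M))"
  proof (rule AE_I2)
    fix x
    have "\<bar>gg x\<bar> \<le> chi * (\<rho> x * Phi k \<alpha> C M)"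
      unfolding gg_def using int_Kf_bd[OF A, of x] chi by (simp add: abs_mult)
    then show "norm (gg x) \<le> norm (chi * (\<rho> x * Phi k \<alpha> C M))" by simp
  qed
qed simp

lemma fubini_step:
  "(LINT x:{..p}|lborel. gg x) =
    chi * (\<integral>h. sgn h * \<bar>h\<bar> powr (k - 1) * (\<integral>x. indicator {..p} x * (\<rho> x * (\<rho> (x + h) - \<rho> x)) \<partial>lborel) \<partial>lborel)"
  and fubini_int:
  "integrable lborel (\<lambda>h. sgn h * \<bar>h\<bar> powr (k - 1) * (\<integral>x. indicator {..p} x * (\<rho> x * (\<rho> (x + h) - \<rho> x)) \<partial>lborel))"
proof -
  have P: "integrable (lborel \<Otimes>\<^sub>M lborel) (case_prod (\<lambda>x h. indicator {..p} x * Kf k \<rho> x h))"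
    using prod_int[OF A, of p] by simp
  have inner: "(\<integral>x. indicator {..p} x * Kf k \<rho> x h \<partial>lborel) =
      sgn h * \<bar>h\<bar> powr (k - 1) * (\<integral>x. indicator {..p} x * (\<rho> x * (\<rho> (x + h) - \<rho> x)) \<partial>lborel)" for h
  proof -
    have "(\<integral>x. indicator {..p} x * Kf k \<rho> x h \<partial>lborel) =
      (\<integral>x. (sgn h * \<bar>h\<bar> powr (k - 1)) * (indicator {..p} x * (\<rho> x * (\<rho> (x + h) - \<rho> x))) \<partial>lborel)"
      unfolding Kf_def by (rule Bochner_Integration.integral_cong) (simp_all add: ac_simps)
    then show ?thesis by simp
  qed
  have "(LINT x:{..p}|lborel. gg x) = (\<integral>x. chi * (\<integral>h. indicator {..p} x * Kf k \<rho> x h \<partial>lborel) \<partial>lborel)"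
    unfolding set_lebesgue_integral_def gg_def by (rule Bochner_Integration.integral_cong) simp_all
  also have "\<dots> = chi * (\<integral>x. (\<integral>h. indicator {..p} x * Kf k \<rho> x h \<partial>lborel) \<partial>lborel)" by simp
  also have "(\<integral>x. (\<integral>h. indicator {..p} x * Kf k \<rho> x h \<partial>lborel) \<partial>lborel) =
     (\<integral>h. (\<integral>x. indicator {..p} x * Kf k \<rho> x h \<partial>lborel) \<partial>lborel)"
    by (rule lborel_pair.Fubini_integral[OF P, symmetric])
  finally show "(LINT x:{..p}|lborel. gg x) =
    chi * (\<integral>h. sgn h * \<bar>h\<bar> powr (k - 1) * (\<integral>x. indicator {..p} x * (\<rho> x * (\<rho> (x + h) - \<rho> x)) \<partial>lborel) \<partial>lborel)"
    by (simp only: inner)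
  show "integrable lborel (\<lambda>h. sgn h * \<bar>h\<bar> powr (k - 1) * (\<integral>x. indicator {..p} x * (\<rho> x * (\<rho> (x + h) - \<rho> x)) \<partial>lborel))"
    using lborel_pair.integrable_snd[OF P] by (simp only: inner)
qed

end

lemma sym_int:
  fixes \<Psi> :: "real \<Rightarrow> real"
  assumes i: "integrable lborel \<Psi>" and z: "\<Psi> 0 = 0"
  shows "(\<integral>h. \<Psi> h \<partial>lborel) = (\<integral>h. indicator {0<..} h * (\<Psi> h + \<Psi> (-h)) \<partial>lborel)"
    and "integrable lborel (\<lambda>h. indicator {0<..} h * (\<Psi> h + \<Psi> (-h)))"
proof -
  have i1: "integrable lborel (\<lambda>h. indicator {0<..} h * \<Psi> h)"
    using integrable_mult_indicator[OF _ i, of "{0<..}"] by simp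
  have i2: "integrable lborel (\<lambda>h. indicator {..<0} h * \<Psi> h)"
    using integrable_mult_indicator[OF _ i, of "{..<0}"] by simp
  have i3: "integrable lborel (\<lambda>h. indicator {0<..} h * \<Psi> (-h))"
    using int_reflect[OF i2] by (simp add: indicator_def)
  have "(\<integral>h. \<Psi> h \<partial>lborel) = (\<integral>h. indicator {0<..} h * \<Psi> h + indicator {..<0} h * \<Psi> h \<partial>lborel)"
    by (rule Bochner_Integration.integral_cong) (use z in \<open>auto simp: indicator_def\<close>)
  also have "\<dots> = (\<integral>h. indicator {0<..} h * \<Psi> h \<partial>lborel) + (\<integral>h. indicator {..<0} h * \<Psi> h \<partial>lborel)"
    by (rule Bochner_Integration.integral_add[OF i1 i2])
  also have "(\<integral>h. indicator {..<0} h * \<Psi> h \<partial>lborel) = \<bar>-1\<bar> *\<^sub>R (\<integral>h. indicator {..<0} (0 + -1 * h) * \<Psi> (0 + -1 * h) \<partial>lborel)"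
    by (rule lborel_integral_real_affine) simp
  also have "\<dots> = (\<integral>h. indicator {0<..} h * \<Psi> (-h) \<partial>lborel)"
    by (simp add: indicator_def)
  also have "(\<integral>h. indicator {0<..} h * \<Psi> h \<partial>lborel) + (\<integral>h. indicator {0<..} h * \<Psi> (-h) \<partial>lborel) =
      (\<integral>h. indicator {0<..} h * \<Psi> h + indicator {0<..} h * \<Psi> (-h) \<partial>lborel)"
    by (rule Bochner_Integration.integral_add[OF i1 i3, symmetric])
  finally show "(\<integral>h. \<Psi> h \<partial>lborel) = (\<integral>h. indicator {0<..} h * (\<Psi> h + \<Psi> (-h)) \<partial>lborel)"
    by (simp add: distrib_left)
  show "integrable lborel (\<lambda>h. indicator {0<..} h * (\<Psi> h + \<Psi> (-h)))"
    using Bochner_Integration.integrable_add[OF i1 i3] by (simp add: distrib_left)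
qed

context
  fixes \<rho> :: "real \<Rightarrow> real" and M :: real
  assumes nn: "\<And>x. 0 \<le> \<rho> x" and bd: "\<And>x. \<rho> x \<le> M"
    and rm[measurable]: "\<rho> \<in> borel_measurable borel"
    and ri: "integrable lborel \<rho>"
begin

lemma int_rr: "integrable lborel (\<lambda>x. indicator S x * (\<rho> x * \<rho> (x + h)))" if [measurable]: "S \<in> sets borel"
proof (rule Bochner_Integration.integrable_bound[where f="\<lambda>x. M * \<rho> x"])
  show "integrable lborel (\<lambda>x. M * \<rho> x)" using ri by simp
  show "AE x in lborel. norm (indicator S x * (\<rho> x * \<rho> (x + h))) \<le> norm (M * \<rho> x)"
  proof (rule AE_I2)
    fix x
    have "\<rho> x * \<rho> (x + h) \<le> \<rho> x * M" using nn bd by (intro mult_left_mono) auto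
    then show "norm (indicator S x * (\<rho> x * \<rho> (x + h))) \<le> norm (M * \<rho> x)"
      using nn[of x] nn[of "x+h"] nn[of 0] bd[of 0] by (auto simp: indicator_def abs_mult mult.commute)
  qed
qed measurable

definition "GG p h = (\<integral>x. indicator {..p} x * (\<rho> x * (\<rho> (x + h) - \<rho> x)) \<partial>lborel)"
definition "JJ p h = (\<integral>x. indicator {p-h<..p} x * (\<rho> x * \<rho> (x + h)) \<partial>lborel)"

lemma GJ: assumes "h > 0" shows "GG p h - GG p (-h) = JJ p h"
proof -
  have sp: "GG p h' = (\<integral>x. indicator {..p} x * (\<rho> x * \<rho> (x + h')) \<partial>lborel) - (\<integral>x. indicator {..p} x * (\<rho> x * \<rho> (x + 0)) \<partial>lborel)" for h'
  proof -
    have "GG p h' = (\<integral>x. indicator {..p} x * (\<rho> x * \<rho> (x + h')) - indicator {..p} x * (\<rho> x * \<rho> (x + 0)) \<partial>lborel)"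
      unfolding GG_def by (rule Bochner_Integration.integral_cong) (simp_all add: algebra_simps)
    also have "\<dots> = (\<integral>x. indicator {..p} x * (\<rho> x * \<rho> (x + h')) \<partial>lborel) - (\<integral>x. indicator {..p} x * (\<rho> x * \<rho> (x + 0)) \<partial>lborel)"
      by (rule Bochner_Integration.integral_diff) (rule int_rr, simp)+
    finally show ?thesis .
  qed
  have sh: "(\<integral>x. indicator {..p} x * (\<rho> x * \<rho> (x + -h)) \<partial>lborel) = (\<integral>x. indicator {..p} (x + h) * (\<rho> x * \<rho> (x + h)) \<partial>lborel)"
  proof -
    have "(\<integral>x. indicator {..p} x * (\<rho> x * \<rho> (x + -h)) \<partial>lborel) =
       \<bar>1\<bar> *\<^sub>R (\<integral>x. indicator {..p} (h + 1 * x) * (\<rho> (h + 1 * x) * \<rho> (h + 1 * x + -h)) \<partial>lborel)"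
      by (rule lborel_integral_real_affine) simp
    then show ?thesis by (simp add: ac_simps)
  qed
  have i2: "integrable lborel (\<lambda>x. indicator {..p} (x + h) * (\<rho> x * \<rho> (x + h)))"
  proof -
    have "(\<lambda>x. indicator {..p} (x + h) * (\<rho> x * \<rho> (x + h))) = (\<lambda>x. indicator {..p-h} x * (\<rho> x * \<rho> (x + h)))"
      using assms by (auto simp: fun_eq_iff indicator_def)
    then show ?thesis using int_rr[of "{..p-h}" h] by simp
  qed
  have "GG p h - GG p (-h) = (\<integral>x. indicator {..p} x * (\<rho> x * \<rho> (x + h)) \<partial>lborel) - (\<integral>x. indicator {..p} (x + h) * (\<rho> x * \<rho> (x + h)) \<partial>lborel)"
    using sp[of h] sp[of "-h"] sh by simp
  also have "\<dots> = (\<integral>x. indicator {..p} x * (\<rho> x * \<rho> (x + h)) - indicator {..p} (x + h) * (\<rho> x * \<rho> (x + h)) \<partial>lborel)"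
    by (rule Bochner_Integration.integral_diff[symmetric]) (rule int_rr, simp, rule i2)
  also have "\<dots> = JJ p h"
    unfolding JJ_def by (rule Bochner_Integration.integral_cong) (use assms in \<open>auto simp: indicator_def\<close>)
  finally show ?thesis .
qed

definition "II p q = (\<integral>s\<in>{0..1}. \<rho> (p - s * q) * \<rho> (p - s * q + q) \<partial>lborel)"

lemma II_sym: "II p (-q) = II p q"
proof -
  have "II p (-q) = (\<integral>s. indicator {0..1} s * (\<rho> (p - s * (-q)) * \<rho> (p - s * (-q) + (-q))) \<partial>lborel)"
    by (simp add: II_def set_lebesgue_integral_def)
  also have "\<dots> = \<bar>-1\<bar> *\<^sub>R (\<integral>s. indicator {0..1} (1 + -1 * s) * (\<rho> (p - (1 + -1 * s) * (-q)) * \<rho> (p - (1 + -1 * s) * (-q) + (-q))) \<partial>lborel)"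
    by (rule lborel_integral_real_affine) simp
  also have "\<dots> = (\<integral>s. indicator {0..1} s * (\<rho> (p - s * q) * \<rho> (p - s * q + q)) \<partial>lborel)"
  proof -
    have "indicator {0..1} (1 + -1 * s) * (\<rho> (p - (1 + -1 * s) * (-q)) * \<rho> (p - (1 + -1 * s) * (-q) + (-q))) =
        indicator {0..1} s * (\<rho> (p - s * q) * \<rho> (p - s * q + q))" for s :: real
    proof -
      have e1: "p - (1 + -1 * s) * (-q) = p - s * q + q" by (simp add: algebra_simps)
      have e2: "p - s * q + q + (-q) = p - s * q" by (simp add: algebra_simps)
      have e3: "indicator {0..1} (1 + -1 * s) = (indicator {0..1} s :: real)" by (auto simp: indicator_def)
      show ?thesis by (simp only: e1 e2 e3 mult.commute[of "\<rho> (p - s * q + q)"])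
    qed
    then show ?thesis by simp
  qed
  also have "\<dots> = II p q" by (simp add: II_def set_lebesgue_integral_def)
  finally show ?thesis .
qed

lemma II_pos: assumes "q > 0" shows "\<bar>q\<bar> powr k * II p q = q powr (k - 1) * JJ p q"
proof -
  have "II p q = (\<integral>s. indicator {0..1} s * (\<rho> (p - s * q) * \<rho> (p - s * q + q)) \<partial>lborel)"
    by (simp add: II_def set_lebesgue_integral_def)
  also have "\<dots> = \<bar>-1/q\<bar> *\<^sub>R (\<integral>x. indicator {0..1} (p/q + (-1/q) * x) * (\<rho> (p - (p/q + (-1/q) * x) * q) * \<rho> (p - (p/q + (-1/q) * x) * q + q)) \<partial>lborel)"
    by (rule lborel_integral_real_affine) (use assms in simp)
  also have "(\<integral>x. indicator {0..1} (p/q + (-1/q) * x) * (\<rho> (p - (p/q + (-1/q) * x) * q) * \<rho> (p - (p/q + (-1/q) * x) * q + q)) \<partial>lborel)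
     = (\<integral>x. indicator {p-q..p} x * (\<rho> x * \<rho> (x + q)) \<partial>lborel)"
  proof (rule Bochner_Integration.integral_cong[OF refl])
    fix x
    have e1: "p - (p/q + (-1/q) * x) * q = x" using assms by (simp add: field_simps)
    have e3: "indicator {0..1} (p/q + (-1/q) * x) = (indicator {p-q..p} x :: real)"
    proof -
      have "p/q + (-1/q) * x = (p - x) / q" using assms by (simp add: field_simps)
      moreover have "0 \<le> (p - x)/q \<longleftrightarrow> x \<le> p" using assms by (simp add: zero_le_divide_iff)
      moreover have "(p - x)/q \<le> 1 \<longleftrightarrow> p - q \<le> x" using assms by (auto simp: divide_le_eq_1)
      ultimately show ?thesis by (auto simp: indicator_def)
    qed
    show "indicator {0..1} (p/q + (-1/q) * x) * (\<rho> (p - (p/q + (-1/q) * x) * q) * \<rho> (p - (p/q + (-1/q) * x) * q + q))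
       = indicator {p-q..p} x * (\<rho> x * \<rho> (x + q))" by (simp only: e1 e3)
  qed
  also have "(\<integral>x. indicator {p-q..p} x * (\<rho> x * \<rho> (x + q)) \<partial>lborel) = JJ p q"
    unfolding JJ_def
  proof (rule integral_cong_AE)
    show "AE x in lborel. indicator {p-q..p} x * (\<rho> x * \<rho> (x + q)) = indicator {p-q<..p} x * (\<rho> x * \<rho> (x + q))"
      using AE_lborel_singleton[of "p-q"] by eventually_elim (auto simp: indicator_def)
  qed measurable
  finally have "II p q = (1/q) * JJ p q" using assms by simp
  then have "\<bar>q\<bar> powr k * II p q = (q powr k * (1/q)) * JJ p q" using assms by simp
  moreover have "q powr k * (1/q) = q powr (k - 1)" using assms by (simp add: powr_diff)
  ultimately show ?thesis by metis
qed

end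

lemma holder_cont:
  assumes hold: "\<And>x y. \<bar>\<rho> x - \<rho> y\<bar> \<le> C * \<bar>x - y\<bar> powr \<alpha>" and a: "\<alpha> > 0"
  shows "isCont (\<rho>::real\<Rightarrow>real) x"
proof -
  have "((\<lambda>y. y - x) \<longlongrightarrow> x - x) (at x)" by (intro tendsto_diff tendsto_ident_at tendsto_const)
  then have "((\<lambda>y. \<bar>y - x\<bar>) \<longlongrightarrow> \<bar>x - x\<bar>) (at x)" by (rule tendsto_rabs)
  then have 1: "((\<lambda>y. \<bar>y - x\<bar>) \<longlongrightarrow> 0) (at x)" by simp
  have 2: "((\<lambda>y. \<bar>y - x\<bar> powr \<alpha>) \<longlongrightarrow> 0) (at x)"
    by (rule tendsto_zero_powrI[OF 1 tendsto_const]) (simp_all add: a)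
  have "((\<lambda>y. C * \<bar>y - x\<bar> powr \<alpha>) \<longlongrightarrow> C * 0) (at x)"
    by (rule tendsto_mult[OF tendsto_const 2])
  then have lim: "((\<lambda>y. C * \<bar>y - x\<bar> powr \<alpha>) \<longlongrightarrow> 0) (at x)" by simp
  have ev: "eventually (\<lambda>y. norm (\<rho> y - \<rho> x) \<le> C * \<bar>y - x\<bar> powr \<alpha>) (at x)"
    by (rule always_eventually) (simp add: hold)
  have "((\<lambda>y. \<rho> y - \<rho> x) \<longlongrightarrow> 0) (at x)"
    by (rule Lim_null_comparison[OF ev lim])
  then show ?thesis unfolding isCont_def by (rule LIM_zero_cancel)
qed

theorem lemma4p2:
  fixes chi k m :: real and \<rho> :: "real \<Rightarrow> real"
  assumes "chi > 0" and "-1 < k" and "k < 0" and "m > 1 - k"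
    and "stationary_state chi k m \<rho>" and "in_Y m \<rho>"
  shows "\<forall>p. \<rho> p powr m =
    chi / 2 * (\<integral>q. \<bar>q\<bar> powr k *
       (\<integral>s\<in>{0..1}. \<rho> (p - s * q) * \<rho> (p - s * q + q) \<partial>lborel) \<partial>lborel)"
proof
  fix p
  note ss = assms(5)[unfolded stationary_state_def]
  have nn: "\<And>x. 0 \<le> \<rho> x" using ss by blast
  have rm[measurable]: "\<rho> \<in> borel_measurable borel" using ss by simp
  have ri: "integrable lborel \<rho>" using ss by blast
  obtain M where bd0: "\<And>x. norm (\<rho> x) \<le> M" using ss unfolding bounded_iff by blast
  have bd: "\<And>x. \<rho> x \<le> M" using bd0 nn by (metis abs_of_nonneg real_norm_def)
  have M0: "M \<ge> 0" using nn[of 0] bd[of 0] by linarith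
  have wd0: "weak_deriv (\<lambda>x. \<rho> x powr m) (\<lambda>x. - chi * \<rho> x * dS k \<rho> x)" using ss by blast
  obtain \<alpha> where al: "-k < \<alpha>" "\<alpha> < 1" and ho: "holder \<alpha> \<rho>" using ss by blast
  obtain C0 where hold0: "\<And>x y. \<bar>\<rho> x - \<rho> y\<bar> \<le> C0 * \<bar>x - y\<bar> powr \<alpha>"
    using ho unfolding holder_def by blast
  define C where "C = \<bar>C0\<bar>"
  have C0: "C \<ge> 0" by (simp add: C_def)
  have hold: "\<And>x y. \<bar>\<rho> x - \<rho> y\<bar> \<le> C * \<bar>x - y\<bar> powr \<alpha>"
  proof -
    fix x y
    have "C0 * \<bar>x - y\<bar> powr \<alpha> \<le> C * \<bar>x - y\<bar> powr \<alpha>" unfolding C_def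
      by (intro mult_right_mono) auto
    then show "\<bar>\<rho> x - \<rho> y\<bar> \<le> C * \<bar>x - y\<bar> powr \<alpha>" using hold0[of x y] by linarith
  qed
  have kk: "-1 < k" "k < 0" using assms by auto
  have chi: "chi > 0" using assms by simp
  have m0: "m > 0" using assms by simp
  note A = nn bd hold C0 kk al(1) rm ri chi
  note B = nn bd rm ri
  define f where "f x = \<rho> x powr m" for x
  define g where "g = gg \<rho> k chi"
  have g_eq: "(\<lambda>x. - chi * \<rho> x * dS k \<rho> x) = g"
    unfolding g_def by (rule ext) (subst gg_def[OF A], rule g_alt)
  have wd: "weak_deriv f g" using wd0 unfolding g_eq f_def[abs_def] .
  have fc: "isCont f x" for x
  proof -
    have "isCont \<rho> x" by (rule holder_cont[OF hold]) (use al kk in auto)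
    then show ?thesis unfolding f_def isCont_def using m0 nn
      by (intro tendsto_intros) auto
  qed
  have fm[measurable]: "f \<in> borel_measurable borel" unfolding f_def[abs_def] by measurable
  have fb: "\<bar>f x\<bar> \<le> M powr m" for x
    unfolding f_def using nn[of x] bd[of x] m0 by (simp add: powr_mono2)
  have fI: "integrable lborel f"
  proof -
    have "integrable lborel (\<lambda>x. \<bar>\<rho> x\<bar> powr m)" using assms(6) unfolding in_Y_def by blast
    then show ?thesis unfolding f_def[abs_def] using nn by simp
  qed
  have gm[measurable]: "g \<in> borel_measurable borel" unfolding g_def by (rule gg_meas[OF A])
  have gI: "integrable lborel g" unfolding g_def by (rule gg_int[OF A])
  have gi: "set_integrable lborel {a..b} g" for a b unfolding set_integrable_def
    by (rule integrable_mult_indicator) (use gI in auto)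
  have fp: "f p = (LINT x:{..p}|lborel. g x)"
    by (rule weak_global[OF wd fc fm fb gm gi fI gI])
  define \<Psi> where "\<Psi> h = sgn h * \<bar>h\<bar> powr (k - 1) * GG \<rho> p h" for h
  have \<Psi>_eq: "(\<lambda>h. sgn h * \<bar>h\<bar> powr (k - 1) * (\<integral>x. indicator {..p} x * (\<rho> x * (\<rho> (x + h) - \<rho> x)) \<partial>lborel)) = \<Psi>"
    unfolding \<Psi>_def[abs_def] by (rule ext) (simp add: GG_def[OF B])
  have step1: "f p = chi * (\<integral>h. \<Psi> h \<partial>lborel)"
    using fp fubini_step[OF A, of p] unfolding g_def \<Psi>_eq by simp
  have \<Psi>I: "integrable lborel \<Psi>" using fubini_int[OF A, of p] unfolding \<Psi>_eq .
  define \<Lambda> where "\<Lambda> q = indicator {0<..} q * (q powr (k - 1) * JJ \<rho> p q)" for q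
  have \<Lambda>_eq: "indicator {0<..} h * (\<Psi> h + \<Psi> (-h)) = \<Lambda> h" for h
  proof (cases "h > 0")
    case True
    have "\<Psi> h + \<Psi> (-h) = h powr (k - 1) * (GG \<rho> p h - GG \<rho> p (-h))"
      using True by (simp add: \<Psi>_def algebra_simps)
    also have "\<dots> = h powr (k - 1) * JJ \<rho> p h" using GJ[OF B True] by simp
    finally show ?thesis using True by (simp add: \<Lambda>_def)
  qed (simp add: \<Lambda>_def)
  have \<Psi>0: "\<Psi> 0 = 0" by (simp add: \<Psi>_def)
  have step2: "(\<integral>h. \<Psi> h \<partial>lborel) = (\<integral>h. \<Lambda> h \<partial>lborel)"
    using sym_int(1)[OF \<Psi>I \<Psi>0] by (simp only: \<Lambda>_eq)
  have \<Lambda>I: "integrable lborel \<Lambda>"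
    using sym_int(2)[OF \<Psi>I \<Psi>0] by (simp only: \<Lambda>_eq)
  define H where "H q = \<bar>q\<bar> powr k * II \<rho> p q" for q
  have H_sym: "H (-q) = H q" for q by (simp add: H_def II_sym[OF B])
  have H_pos: "q > 0 \<Longrightarrow> H q = q powr (k - 1) * JJ \<rho> p q" for q
    unfolding H_def by (rule II_pos[OF B])
  have H_split: "H q = \<Lambda> q + \<Lambda> (-q)" for q
  proof -
    consider "q > 0" | "q < 0" | "q = 0" by linarith
    then show ?thesis
    proof cases
      case 1 then show ?thesis by (simp add: \<Lambda>_def H_pos)
    next
      case 2
      then have "H q = H (-q)" by (simp add: H_sym)
      also have "\<dots> = (-q) powr (k - 1) * JJ \<rho> p (-q)" using 2 by (intro H_pos) simp
      finally show ?thesis using 2 by (simp add: \<Lambda>_def)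
    next
      case 3 then show ?thesis by (simp add: \<Lambda>_def H_def)
    qed
  qed
  have HI: "integrable lborel H"
    unfolding H_split[abs_def] by (intro Bochner_Integration.integrable_add \<Lambda>I int_reflect[OF \<Lambda>I])
  have H0: "H 0 = 0" by (simp add: H_def)
  have "(\<integral>q. H q \<partial>lborel) = (\<integral>q. indicator {0<..} q * (H q + H (-q)) \<partial>lborel)"
    by (rule sym_int(1)[OF HI H0])
  also have "\<dots> = (\<integral>q. 2 * \<Lambda> q \<partial>lborel)"
  proof (rule Bochner_Integration.integral_cong[OF refl])
    fix q
    show "indicator {0<..} q * (H q + H (-q)) = 2 * \<Lambda> q"
      by (cases "q > 0") (simp_all add: H_sym H_pos \<Lambda>_def)
  qed
  finally have "(\<integral>q. H q \<partial>lborel) = 2 * (\<integral>q. \<Lambda> q \<partial>lborel)" by simp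
  then have "chi / 2 * (\<integral>q. H q \<partial>lborel) = f p" using step1 step2 by simp
  then show "\<rho> p powr m =
    chi / 2 * (\<integral>q. \<bar>q\<bar> powr k *
       (\<integral>s\<in>{0..1}. \<rho> (p - s * q) * \<rho> (p - s * q + q) \<partial>lborel) \<partial>lborel)"
    unfolding f_def H_def II_def[OF B] by simp
qed

end
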